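(* Let $n\ge2$, $R>0$, $0<\kappa<R$, and let $\Omega\subset\mathbb{R}^n$ be an open set satisfying property $(\mathcal{P}_{R,\kappa})$: for all $0<r<R$ and all $z\in\partial\Omega$ there exists $x_{r,z}\in\Omega^c$ with $B_{\kappa r}(x_{r,z})\subset \Omega^c\cap B_r(z)$. Then there exist $\theta=\theta(n,\kappa)\in(0,1)$ and $C=C(n,\kappa)>0$ such that \[ \big|\{0<d_\Omega<r\rho\}\cap B_\rho(z)\big|\le C r^\theta |B_\rho| \] for all $z\in\partial\Omega$, $r\in(0,1/2)$ and $\rho\in(0,2R)$.
   Context: $d_\Omega(x)=\mathrm{dist}(x,\Omega^c)$ for $x\in\mathbb{R}^n$ (so $d_\Omega=0$ on $\Omega^c$); $|\cdot|$ denotes Lebesgue measure and $B_\rho(z)$ the open ball of radius $\rho$ centered at $z$. *)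

theory Defs
  imports "HOL-Analysis.Analysis"
begin

definition d_Omega :: "'a::euclidean_space set \<Rightarrow> 'a \<Rightarrow> real" where
  "d_Omega \<Omega> x = infdist x (- \<Omega>)"

definition prop_P :: "real \<Rightarrow> real \<Rightarrow> 'a::euclidean_space set \<Rightarrow> bool" where
  "prop_P R \<kappa> \<Omega> \<longleftrightarrow>
     (\<forall>r z. 0 < r \<and> r < R \<and> z \<in> frontier \<Omega> \<longrightarrow>
        (\<exists>x \<in> - \<Omega>. ball x (\<kappa> * r) \<subseteq> (- \<Omega>) \<inter> ball z r))"

end

theory Submission imports Defs begin

lemma emeasure_ball_eq:
  fixes x :: "'a::euclidean_space"
  shows "emeasure lborel (ball x t) = ennreal (measure lborel (ball (0::'a) t))"
proof (cases "t \<ge> 0")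
  case True
  have "emeasure lborel (ball x t) = ennreal (measure lborel (ball x t))"
    using emeasure_lborel_ball_finite[of x t] by (subst emeasure_eq_ennreal_measure) auto
  also have "measure lborel (ball x t) = measure lborel (ball (0::'a) t)"
    using content_ball_conv_unit_ball[OF True, of x] content_ball_conv_unit_ball[OF True, of "0::'a"] by simp
  finally show ?thesis .
qed (simp add: ball_empty)

lemma avg_meas:
  fixes A :: "'a::euclidean_space set"
  assumes A: "A \<in> sets borel"
  shows "(\<lambda>y. \<integral>\<^sup>+x. indicator A x * indicator (ball y t) x \<partial>lborel) \<in> borel_measurable lborel"
proof -
  have "(\<lambda>(y,x). indicator A x * indicator (ball y t) x :: ennreal) \<in> borel_measurable (lborel \<Otimes>\<^sub>M lborel)"
  proof -
    have e: "(\<lambda>(y,x). indicator A x * indicator (ball y t) x :: ennreal) = (\<lambda>p. indicator A (snd p) * indicator {p::'a\<times>'a. dist (fst p) (snd p) < t} p)"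
      by (auto simp: fun_eq_iff indicator_def)
    have o: "open {p::'a\<times>'a. dist (fst p) (snd p) < t}"
      by (intro open_Collect_less continuous_intros)
    show ?thesis unfolding e using A o
      by (simp add: borel_measurable_indicator' borel_prod[symmetric])
  qed
  thus ?thesis by (rule lborel.borel_measurable_nn_integral)
qed

lemma avg:
  fixes A :: "'a::euclidean_space set"
  assumes A: "A \<in> sets borel"
  shows "(\<integral>\<^sup>+y. (\<integral>\<^sup>+x. indicator A x * indicator (ball y t) x \<partial>lborel) \<partial>lborel) = emeasure lborel A * emeasure lborel (ball (0::'a) t)"
proof -
  have m: "(\<lambda>(x,y). indicator A x * indicator (ball y t) x :: ennreal) \<in> borel_measurable (lborel \<Otimes>\<^sub>M lborel)"
  proof -
    have e: "(\<lambda>(x,y). indicator A x * indicator (ball y t) x :: ennreal) = (\<lambda>p. indicator A (fst p) * indicator {p::'a\<times>'a. dist (snd p) (fst p) < t} p)"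
      by (auto simp: fun_eq_iff indicator_def)
    have o: "open {p::'a\<times>'a. dist (snd p) (fst p) < t}"
      by (intro open_Collect_less continuous_intros)
    show ?thesis unfolding e using A o
      by (simp add: borel_prod[symmetric])
  qed
  have "(\<integral>\<^sup>+y. (\<integral>\<^sup>+x. indicator A x * indicator (ball y t) x \<partial>lborel) \<partial>lborel)
     = (\<integral>\<^sup>+x. (\<integral>\<^sup>+y. indicator A x * indicator (ball y t) x \<partial>lborel) \<partial>lborel)"
    using lborel_pair.Fubini'[OF m] by simp
  also have "\<dots> = (\<integral>\<^sup>+x. indicator A x * emeasure lborel (ball (0::'a) t) \<partial>lborel)"
  proof (rule nn_integral_cong)
    fix x :: 'a
    have "(\<integral>\<^sup>+y. indicator A x * indicator (ball y t) x \<partial>lborel) = (\<integral>\<^sup>+y. indicator A x * indicator (ball x t) y \<partial>lborel)"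
      by (intro nn_integral_cong) (auto simp: indicator_def dist_commute)
    also have "\<dots> = indicator A x * emeasure lborel (ball x t)"
      by (simp add: nn_integral_cmult_indicator)
    also have "emeasure lborel (ball x t) = emeasure lborel (ball (0::'a) t)"
      by (simp add: emeasure_ball_eq)
    finally show "(\<integral>\<^sup>+y. indicator A x * indicator (ball y t) x \<partial>lborel) = indicator A x * emeasure lborel (ball (0::'a) t)" .
  qed
  also have "\<dots> = emeasure lborel A * emeasure lborel (ball (0::'a) t)"
    using A by (simp add: nn_integral_multc mult.commute)
  finally show ?thesis .
qed


lemma infdist_lt_ex:
  assumes "A \<noteq> {}" "infdist x A < e"
  shows "\<exists>a\<in>A. dist x a < e"
proof -
  have "(INF a\<in>A. dist x a) < e" using assms by (simp add: infdist_notempty)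
  moreover have "bdd_below ((\<lambda>a. dist x a) ` A)" by (rule bdd_belowI[of _ 0]) auto
  ultimately show ?thesis using assms(1) by (simp add: cINF_less_iff)
qed

lemma hole:
  fixes \<Omega> :: "'a::euclidean_space set"
  assumes P: "prop_P R \<kappa> \<Omega>" and k: "0 < \<kappa>" and t: "0 < t" "t/2 < R"
    and w: "w \<in> frontier \<Omega>" and yw: "dist y w < t/2" and op: "open \<Omega>"
  shows "\<exists>p. ball p (min \<kappa> 1 * t/4) \<subseteq> ball y t \<and>
     (\<forall>q\<in>ball p (min \<kappa> 1 * t/4). min \<kappa> 1 * t/4 \<le> infdist q (frontier \<Omega>))"
proof -
  obtain p where p: "ball p (\<kappa> * (t/2)) \<subseteq> (- \<Omega>) \<inter> ball w (t/2)"
    using P t w unfolding prop_P_def by (metis half_gt_zero)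
  have km: "min \<kappa> 1 * t/4 \<le> \<kappa> * (t/2) / 2"
  proof -
    have "min \<kappa> 1 * t \<le> \<kappa> * t" using t by (intro mult_right_mono) auto
    then show ?thesis by simp
  qed
  have km0: "0 \<le> min \<kappa> 1 * t / 4" using k t by simp
  show ?thesis
  proof (intro exI conjI ballI subsetI)
    fix q assume q: "q \<in> ball p (min \<kappa> 1 * t/4)"
    then have "q \<in> ball p (\<kappa> * (t/2))" using km km0 by auto
    then have "q \<in> ball w (t/2)" using p by auto
    then show "q \<in> ball y t" using yw by (simp add: dist_commute) (smt (verit) dist_triangle)
  next
    fix q assume q: "q \<in> ball p (min \<kappa> 1 * t/4)"
    show "min \<kappa> 1 * t/4 \<le> infdist q (frontier \<Omega>)"
    proof (rule ccontr)
      assume "\<not> ?thesis"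
      then obtain s where s: "s \<in> frontier \<Omega>" "dist q s < min \<kappa> 1 * t/4"
        using infdist_lt_ex[of "frontier \<Omega>" q "min \<kappa> 1 * t/4"] w by (metis empty_iff not_le)
      have "dist p s < \<kappa> * (t/2)" using q s km by simp (smt (verit) dist_triangle)
      then have sb: "s \<in> ball p (\<kappa> * (t/2))" by simp
      have "ball p (\<kappa> * (t/2)) \<subseteq> interior (- \<Omega>)"
        using p by (intro interior_maximal) auto
      then have "s \<notin> closure \<Omega>" using sb by (auto simp: interior_complement)
      then show False using s(1) by (simp add: frontier_def)
    qed
  qed
qed


lemma open_N: "open {q. infdist q S < s}"
  by (intro open_Collect_less continuous_intros)

lemma fin_ball_int: "emeasure lborel (X \<inter> ball (z::'a::euclidean_space) r) \<noteq> \<infinity>"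
proof -
  have "emeasure lborel (X \<inter> ball z r) \<le> emeasure lborel (ball z r)"
    by (intro emeasure_mono) auto
  then show ?thesis using emeasure_lborel_ball_finite[of z r] by (auto simp: top_unique)
qed

lemma step:
  fixes \<Omega> :: "'a::euclidean_space set"
  assumes P: "prop_P R \<kappa> \<Omega>" and k: "0 < \<kappa>" and t: "0 < t" "t/2 < R"
    and w0: "w0 \<in> frontier \<Omega>" and op: "open \<Omega>"
  shows "measure lborel ({q. infdist q (frontier \<Omega>) < min \<kappa> 1 * t/4} \<inter> ball z r)
       + (min \<kappa> 1/4)^DIM('a) * measure lborel ({q. infdist q (frontier \<Omega>) < t/2} \<inter> ball z (r - t))
       \<le> measure lborel ({q. infdist q (frontier \<Omega>) < min \<kappa> 1 * t/4 + t} \<inter> ball z (r + t))"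
proof -
  define S where "S = frontier \<Omega>"
  define kk where "kk = min \<kappa> 1"
  define A where "A = {q. infdist q S < kk * t/4} \<inter> ball z r"
  define Cl where "Cl = {q. infdist q S < t/2} \<inter> ball z (r - t)"
  define Y where "Y = {q. infdist q S < kk * t/4 + t} \<inter> ball z (r + t)"
  define mb where "mb = measure lborel (ball (0::'a) t)"
  define c where "c = (kk/4)^DIM('a)"
  have kk: "0 < kk" "kk \<le> 1" using k by (auto simp: kk_def)
  have Ab: "A \<in> sets borel" "Cl \<in> sets borel" "Y \<in> sets borel"
    unfolding A_def Cl_def Y_def by (intro borel_open open_Int open_N open_ball)+
  have mbpos: "0 < mb" unfolding mb_def using t by (simp add: content_ball_pos)
  have ballm: "emeasure lborel (ball (x::'a) s) = ennreal (measure lborel (ball (0::'a) s))" for x s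
    by (rule emeasure_ball_eq)
  have hm: "measure lborel (ball (0::'a) (kk * t / 4)) = c * mb"
  proof -
    have "measure lborel (ball (0::'a) (kk * t / 4)) = (kk*t/4)^DIM('a) * measure lborel (ball (0::'a) 1)"
      using kk t by (intro content_ball_conv_unit_ball) auto
    also have "\<dots> = c * ((t)^DIM('a) * measure lborel (ball (0::'a) 1))"
      by (simp add: c_def power_mult_distrib[symmetric])
    also have "(t)^DIM('a) * measure lborel (ball (0::'a) 1) = mb"
      unfolding mb_def using t by (intro content_ball_conv_unit_ball[symmetric]) auto
    finally show ?thesis .
  qed
  define F where "F y = (\<integral>\<^sup>+x. indicator A x * indicator (ball y t) x \<partial>lborel)" for y
  have Fe: "F y = emeasure lborel (A \<inter> ball y t)" for y
  proof -
    have "F y = (\<integral>\<^sup>+x. indicator (A \<inter> ball y t) x \<partial>lborel)"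
      unfolding F_def by (intro nn_integral_cong) (auto simp: indicator_def)
    also have "\<dots> = emeasure lborel (A \<inter> ball y t)"
      using Ab by (intro nn_integral_indicator) auto
    finally show ?thesis .
  qed
  have pw: "F y + ennreal (c * mb) * indicator Cl y \<le> ennreal mb * indicator Y y" for y
  proof (cases "y \<in> Cl")
    case True
    then have "infdist y S < t/2" by (auto simp: Cl_def)
    then obtain w where w: "w \<in> S" "dist y w < t/2"
      using infdist_lt_ex[of S y "t/2"] w0 S_def by auto
    obtain p where p: "ball p (kk * t/4) \<subseteq> ball y t"
      "\<forall>q\<in>ball p (kk * t/4). kk * t/4 \<le> infdist q S"
      using hole[OF P k t w(1)[unfolded S_def] w(2) op] by (auto simp: kk_def S_def)
    have disj: "(A \<inter> ball y t) \<inter> ball p (kk * t/4) = {}"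
      using p(2) by (force simp: A_def)
    have "F y + ennreal (c * mb) = emeasure lborel (A \<inter> ball y t) + emeasure lborel (ball p (kk * t/4))"
      by (simp add: Fe ballm hm)
    also have "\<dots> = emeasure lborel ((A \<inter> ball y t) \<union> ball p (kk * t/4))"
      using Ab disj by (intro plus_emeasure) auto
    also have "\<dots> \<le> emeasure lborel (ball y t)"
      using p(1) by (intro emeasure_mono) auto
    also have "\<dots> = ennreal mb" by (simp add: ballm mb_def)
    finally have "F y + ennreal (c * mb) \<le> ennreal mb" .
    moreover have "y \<in> Y"
    proof -
      have "0 < kk * t" using kk t by simp
      moreover have "infdist y S < t/2" "dist z y < r - t" using True by (auto simp: Cl_def)
      ultimately have "infdist y S < kk * t/4 + t" "dist z y < r + t" using t by linarith+
      then show ?thesis unfolding Y_def by auto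
    qed
    ultimately show ?thesis using True by simp
  next
    case False
    show ?thesis
    proof (cases "A \<inter> ball y t = {}")
      case True
      then show ?thesis using False by (simp add: Fe)
    next
      case ne: False
      then obtain q where q: "q \<in> A" "dist y q < t" by auto
      have "infdist y S \<le> infdist q S + dist y q" by (rule infdist_triangle)
      moreover have "dist z y \<le> dist z q + dist q y" by (rule dist_triangle)
      ultimately have "y \<in> Y" using q unfolding A_def Y_def by (auto simp: dist_commute)
      have "F y \<le> emeasure lborel (ball y t)" unfolding Fe by (intro emeasure_mono) auto
      then show ?thesis using False \<open>y \<in> Y\<close> by (simp add: ballm mb_def)
    qed
  qed
  have "(\<integral>\<^sup>+y. F y + ennreal (c * mb) * indicator Cl y \<partial>lborel) \<le> (\<integral>\<^sup>+y. ennreal mb * indicator Y y \<partial>lborel)"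
    by (intro nn_integral_mono pw)
  also have "\<dots> = ennreal mb * emeasure lborel Y"
    using Ab by (simp add: nn_integral_cmult_indicator)
  also have "(\<integral>\<^sup>+y. F y + ennreal (c * mb) * indicator Cl y \<partial>lborel) = (\<integral>\<^sup>+y. F y \<partial>lborel) + ennreal (c * mb) * emeasure lborel Cl"
  proof -
    have Fm: "F \<in> borel_measurable lborel" unfolding F_def[abs_def] by (rule avg_meas[OF Ab(1)])
    show ?thesis using Ab Fm by (subst nn_integral_add) (auto simp: nn_integral_cmult_indicator)
  qed
  also have "(\<integral>\<^sup>+y. F y \<partial>lborel) = emeasure lborel A * ennreal mb"
    unfolding F_def using avg[OF Ab(1), of t] by (simp add: ballm mb_def)
  finally have E: "emeasure lborel A * ennreal mb + ennreal (c * mb) * emeasure lborel Cl \<le> ennreal mb * emeasure lborel Y" .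
  have fA: "emeasure lborel A = ennreal (measure lborel A)"
    unfolding A_def using fin_ball_int by (intro emeasure_eq_ennreal_measure) auto
  have fC: "emeasure lborel Cl = ennreal (measure lborel Cl)"
    unfolding Cl_def using fin_ball_int by (intro emeasure_eq_ennreal_measure) auto
  have fY: "emeasure lborel Y = ennreal (measure lborel Y)"
    unfolding Y_def using fin_ball_int by (intro emeasure_eq_ennreal_measure) auto
  have c0: "0 \<le> c" using kk by (simp add: c_def)
  have "ennreal (measure lborel A * mb + c * mb * measure lborel Cl) \<le> ennreal (mb * measure lborel Y)"
    using E mbpos c0 unfolding fA fC fY by (simp add: ennreal_mult'[symmetric] ennreal_plus[symmetric] del: ennreal_plus)
  then have "measure lborel A * mb + c * mb * measure lborel Cl \<le> mb * measure lborel Y"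
    using mbpos by (subst (asm) ennreal_le_iff) auto
  then have "mb * (measure lborel A + c * measure lborel Cl) \<le> mb * measure lborel Y"
    by (simp add: algebra_simps)
  then have "measure lborel A + c * measure lborel Cl \<le> measure lborel Y"
    using mbpos by simp
  then show ?thesis by (simp add: A_def Cl_def Y_def S_def kk_def c_def)
qed


lemma u_mono:
  fixes z :: "'a::euclidean_space"
  assumes "s1 \<le> s2" "r1 \<le> r2"
  shows "measure lborel ({q. infdist q S < s1} \<inter> ball z r1) \<le> measure lborel ({q. infdist q S < s2} \<inter> ball z r2)"
proof (rule measure_mono_fmeasurable)
  show "{q. infdist q S < s1} \<inter> ball z r1 \<subseteq> {q. infdist q S < s2} \<inter> ball z r2"
    using assms by auto
  show "{q. infdist q S < s1} \<inter> ball z r1 \<in> sets lborel"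
    by (simp only: sets_lborel) (intro borel_open open_Int open_N open_ball)
  show "{q. infdist q S < s2} \<inter> ball z r2 \<in> fmeasurable lborel"
    unfolding fmeasurable_def using fin_ball_int[of _ z r2]
    by (simp only: sets_lborel mem_Collect_eq) (auto intro!: borel_open open_Int open_N simp: less_top)
qed

lemma contract:
  fixes \<Omega> :: "'a::euclidean_space set"
  assumes P: "prop_P R \<kappa> \<Omega>" and k: "0 < \<kappa>" and s: "0 < s" "s < 4 * R"
    and w0: "w0 \<in> frontier \<Omega>" and op: "open \<Omega>"
  shows "(1 + (min \<kappa> 1/4)^DIM('a)) * measure lborel ({q. infdist q (frontier \<Omega>) < min \<kappa> 1 / 8 * s} \<inter> ball z r)
     \<le> measure lborel ({q. infdist q (frontier \<Omega>) < s} \<inter> ball z (r + s))"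
proof -
  define u where "u a b = measure lborel ({q. infdist q (frontier \<Omega>) < a} \<inter> ball z b)" for a b
  define kk where "kk = min \<kappa> 1"
  define c where "c = (kk/4)^DIM('a)"
  have kk: "0 < kk" "kk \<le> 1" using k by (auto simp: kk_def)
  have st: "u (kk * (s/2)/4) (r + s/2) + c * u ((s/2)/2) (r + s/2 - s/2) \<le> u (kk * (s/2)/4 + s/2) (r + s/2 + s/2)"
  proof -
    have "0 < s/2" "s/2/2 < R" using s by auto
    from step[OF P k this w0 op, of z "r + s/2"] show ?thesis unfolding u_def kk_def c_def .
  qed
  have e1: "kk * (s/2)/4 = kk/8 * s" by simp
  have "u (kk/8 * s) r \<le> u (kk/8 * s) (r + s/2)" unfolding u_def by (rule u_mono) (use s in auto)
  moreover have "u (kk/8 * s) r \<le> u ((s/2)/2) (r + s/2 - s/2)" unfolding u_def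
    by (rule u_mono) (use s kk in auto)
  moreover have "u (kk * (s/2)/4 + s/2) (r + s/2 + s/2) \<le> u s (r + s)" unfolding u_def
  proof (rule u_mono)
    have "kk * s \<le> 1 * s" using kk s by (intro mult_right_mono) auto
    moreover have "kk * (s/2)/4 = (kk * s) / 8" by simp
    ultimately show "kk * (s/2)/4 + s/2 \<le> s" using s by linarith
  qed simp
  moreover have "0 \<le> c" using kk by (simp add: c_def)
  ultimately have "u (kk/8 * s) r + c * u (kk/8 * s) r \<le> u s (r + s)"
  proof -
    assume a: "u (kk/8 * s) r \<le> u (kk/8 * s) (r + s/2)" "u (kk/8 * s) r \<le> u ((s/2)/2) (r + s/2 - s/2)"
      "u (kk * (s/2)/4 + s/2) (r + s/2 + s/2) \<le> u s (r + s)" "0 \<le> c"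
    have "c * u (kk/8 * s) r \<le> c * u ((s/2)/2) (r + s/2 - s/2)" using a(2,4) by (rule mult_left_mono)
    then show ?thesis using a st unfolding e1 by linarith
  qed
  then show ?thesis by (simp add: u_def kk_def c_def algebra_simps)
qed

lemma iterate:
  fixes \<Omega> :: "'a::euclidean_space set"
  assumes P: "prop_P R \<kappa> \<Omega>" and k: "0 < \<kappa>"
    and w0: "w0 \<in> frontier \<Omega>" and op: "open \<Omega>"
  shows "\<forall>s r. 0 < s \<longrightarrow> s < 4 * R \<longrightarrow>
     (1 + (min \<kappa> 1/4)^DIM('a))^n * measure lborel ({q. infdist q (frontier \<Omega>) < (min \<kappa> 1 / 8)^n * s} \<inter> ball z r)
     \<le> measure lborel ({q. infdist q (frontier \<Omega>) < s} \<inter> ball z (r + 2 * s))"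
proof (induction n)
  case 0
  then show ?case by (auto intro!: u_mono)
next
  case (Suc n)
  show ?case
  proof (intro allI impI)
    fix s r :: real assume s: "0 < s" "s < 4 * R"
    define u where "u a b = measure lborel ({q. infdist q (frontier \<Omega>) < a} \<inter> ball z b)" for a b
    define l where "l = min \<kappa> 1 / 8"
    define c where "c = (min \<kappa> 1/4)^DIM('a)"
    have l: "0 < l" "l \<le> 1/8" using k by (auto simp: l_def)
    have c: "0 \<le> c" using k by (simp add: c_def)
    have "l * s \<le> 1 * s" using l s by (intro mult_right_mono) auto
    then have "l * s < 4 * R" using s by linarith
    then have IH: "(1 + c)^n * u (l^n * (l * s)) r \<le> u (l * s) (r + 2 * (l * s))"
    proof -
      have "0 < l * s" using l s by simp
      from Suc.IH[rule_format, OF this \<open>l * s < 4 * R\<close>, of r] show ?thesis unfolding u_def l_def c_def .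
    qed
    have C: "(1 + c) * u (l * s) (r + 2 * (l * s)) \<le> u s (r + 2 * (l * s) + s)"
      using contract[OF P k s w0 op, of z "r + 2 * (l * s)"] unfolding u_def l_def c_def by simp
    have M: "u s (r + 2 * (l * s) + s) \<le> u s (r + 2 * s)" unfolding u_def
      by (rule u_mono) (use l s in auto)
    have "(1 + c)^Suc n * u (l^Suc n * s) r = (1 + c) * ((1 + c)^n * u (l^n * (l * s)) r)"
      by (simp add: mult.assoc mult.commute mult.left_commute)
    also have "\<dots> \<le> (1 + c) * u (l * s) (r + 2 * (l * s))"
      using IH c by (intro mult_left_mono) auto
    also have "\<dots> \<le> u s (r + 2 * s)" using C M by linarith
    finally show "(1 + (min \<kappa> 1/4)^DIM('a))^Suc n * measure lborel ({q. infdist q (frontier \<Omega>) < (min \<kappa> 1 / 8)^Suc n * s} \<inter> ball z r)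
     \<le> measure lborel ({q. infdist q (frontier \<Omega>) < s} \<inter> ball z (r + 2 * s))"
      unfolding u_def l_def c_def .
  qed
qed


lemma meas_sub:
  fixes z :: "'a::euclidean_space"
  assumes "X \<subseteq> Y \<inter> ball z r" "X \<in> sets borel" "Y \<in> sets borel"
  shows "measure lborel X \<le> measure lborel (Y \<inter> ball z r)"
proof (rule measure_mono_fmeasurable)
  show "X \<subseteq> Y \<inter> ball z r" by fact
  show "X \<in> sets lborel" using assms by simp
  show "Y \<inter> ball z r \<in> fmeasurable lborel"
    unfolding fmeasurable_def using fin_ball_int[of Y z r] assms
    by (auto simp: less_top)
qed

theorem lemma3p1:
  fixes \<kappa> :: real
  assumes "DIM('a::euclidean_space) \<ge> 2" and "0 < \<kappa>"
  shows "\<exists>\<theta> C. 0 < \<theta> \<and> \<theta> < 1 \<and> 0 < C \<and>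
    (\<forall>R (\<Omega>::'a set). 0 < R \<longrightarrow> \<kappa> < R \<longrightarrow> open \<Omega> \<longrightarrow> prop_P R \<kappa> \<Omega> \<longrightarrow>
      (\<forall>z r \<rho>. z \<in> frontier \<Omega> \<longrightarrow> 0 < r \<longrightarrow> r < 1/2 \<longrightarrow> 0 < \<rho> \<longrightarrow> \<rho> < 2 * R \<longrightarrow>
         measure lebesgue ({x. 0 < d_Omega \<Omega> x \<and> d_Omega \<Omega> x < r * \<rho>} \<inter> ball z \<rho>)
           \<le> C * r powr \<theta> * measure lebesgue (ball (0::'a) \<rho>)))"
proof -
  define kk where "kk = min \<kappa> 1"
  define l where "l = kk / 8"
  define c where "c = (kk/4)^DIM('a)"
  define L where "L = ln (1 + c)"
  define \<theta> where "\<theta> = L / (- ln l)"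
  define C where "C = 3^DIM('a) * (1 + c)"
  have kk: "0 < kk" "kk \<le> 1" using assms by (auto simp: kk_def)
  have l: "0 < l" "l \<le> 1/8" using kk by (auto simp: l_def)
  have c: "0 < c" "c \<le> 1" using kk by (auto simp: c_def power_le_one)
  have L: "0 < L" using c by (simp add: L_def)
  have lnl: "ln l < 0" using l by simp
  have "1 + c < 1 / l"
  proof -
    have "8 \<le> 1 / l" using l by (simp add: field_simps)
    then show ?thesis using c by linarith
  qed
  then have "L < ln (1 / l)" unfolding L_def using c l by (subst ln_less_cancel_iff) auto
  then have Ll: "L < - ln l" using l by (simp add: ln_div)
  have th: "0 < \<theta>" "\<theta> < 1" using L Ll lnl by (auto simp: \<theta>_def field_simps)
  have C: "0 < C" using c by (simp add: C_def)
  have main: "\<forall>R (\<Omega>::'a set). 0 < R \<longrightarrow> \<kappa> < R \<longrightarrow> open \<Omega> \<longrightarrow> prop_P R \<kappa> \<Omega> \<longrightarrow>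
      (\<forall>z r \<rho>. z \<in> frontier \<Omega> \<longrightarrow> 0 < r \<longrightarrow> r < 1/2 \<longrightarrow> 0 < \<rho> \<longrightarrow> \<rho> < 2 * R \<longrightarrow>
         measure lebesgue ({x. 0 < d_Omega \<Omega> x \<and> d_Omega \<Omega> x < r * \<rho>} \<inter> ball z \<rho>)
           \<le> C * r powr \<theta> * measure lebesgue (ball (0::'a) \<rho>))"
  proof (intro allI impI)
    fix R :: real and \<Omega> :: "'a set" and z :: 'a and r \<rho> :: real
    assume R: "0 < R" and kR: "\<kappa> < R" and op: "open \<Omega>" and P: "prop_P R \<kappa> \<Omega>"
      and z: "z \<in> frontier \<Omega>" and r: "0 < r" "r < 1/2" and \<rho>: "0 < \<rho>" "\<rho> < 2 * R"
    define S where "S = frontier \<Omega>"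
    define u where "u a b = measure lborel ({q. infdist q S < a} \<inter> ball z b)" for a b
    define x where "x = ln r / ln l"
    define k where "k = nat \<lfloor>x\<rfloor>"
    have lnr: "ln r < 0" using r by simp
    have x0: "0 < x" using lnr lnl by (simp add: x_def divide_neg_neg)
    have kx: "real k \<le> x" "x < real k + 1" using x0 by (auto simp: k_def)
    have rlk: "r \<le> l^k"
    proof -
      have "ln r = x * ln l" using lnl by (simp add: x_def)
      also have "\<dots> \<le> real k * ln l" using kx lnl by (intro mult_right_mono_neg) auto
      also have "\<dots> = ln (l^k)" using l by (simp add: ln_realpow)
      finally show ?thesis using r l by simp
    qed
    have key: "1 \<le> (1 + c)^k * ((1 + c) * r powr \<theta>)"
    proof -
      have a0: "(1 + c)^k = exp (real k * L)"
      proof -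
        have "exp (real k * L) = exp (ln ((1 + c)^k))" using c by (simp add: L_def ln_realpow)
        also have "\<dots> = (1 + c)^k" using c by simp
        finally show ?thesis by simp
      qed
      have a: "(1 + c)^k * (1 + c) = exp ((real k + 1) * L)"
        using c by (simp add: a0 L_def exp_add distrib_right)
      have "\<theta> * ln r = - L * x" using lnl by (simp add: \<theta>_def x_def field_simps)
      then have b: "r powr \<theta> = exp (- L * x)" using r by (simp add: powr_def mult.commute)
      have "(1 + c)^k * ((1 + c) * r powr \<theta>) = exp ((real k + 1) * L + (- L * x))"
        by (simp only: mult.assoc[symmetric] a b exp_add)
      moreover have "0 \<le> (real k + 1) * L + (- L * x)"
      proof -
        have "0 \<le> (real k + 1 - x) * L" using kx L by simp
        then show ?thesis by (simp add: algebra_simps)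
      qed
      ultimately show ?thesis by simp
    qed
    define E where "E = {x. 0 < d_Omega \<Omega> x \<and> d_Omega \<Omega> x < r * \<rho>} \<inter> ball z \<rho>"
    have Eb: "E \<in> sets borel"
    proof -
      have "open {x. 0 < d_Omega \<Omega> x \<and> d_Omega \<Omega> x < r * \<rho>}"
        unfolding d_Omega_def by (intro open_Collect_conj open_Collect_less continuous_intros)
      then show ?thesis unfolding E_def by (intro borel_open open_Int open_ball)
    qed
    have Esub: "E \<subseteq> {q. infdist q S < r * \<rho>} \<inter> ball z \<rho>"
    proof
      fix y assume y: "y \<in> E"
      then have d: "0 < infdist y (- \<Omega>)" "infdist y (- \<Omega>) < r * \<rho>" "y \<in> ball z \<rho>"
        by (auto simp: E_def d_Omega_def)
      have yO: "y \<in> \<Omega>" using d(1) by (metis ComplI infdist_zero less_irrefl)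
      have ne: "- \<Omega> \<noteq> {}" using d(1) by (auto simp: infdist_def)
      obtain q where q: "q \<in> - \<Omega>" "dist y q < r * \<rho>" using infdist_lt_ex[OF ne d(2)] by auto
      have "closed_segment y q \<inter> frontier \<Omega> \<noteq> {}"
        using yO q(1) by (intro connected_Int_frontier) auto
      then obtain w where w: "w \<in> closed_segment y q" "w \<in> frontier \<Omega>" by auto
      have "dist y w \<le> dist y q" using w(1) using dist_in_closed_segment[of w y q] by (simp add: dist_commute)
      then have "infdist y S < r * \<rho>" using infdist_le[of w S y] w(2) q(2) by (simp add: S_def)
      then show "y \<in> {q. infdist q S < r * \<rho>} \<inter> ball z \<rho>" using d(3) by simp
    qed
    have NB: "{q. infdist q S < a} \<in> sets borel" for a by (intro borel_open open_N)
    have "measure lebesgue E = measure lborel E" using Eb by simp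
    also have "\<dots> \<le> u (r * \<rho>) \<rho>" unfolding u_def by (rule meas_sub[OF Esub Eb NB])
    also have "\<dots> \<le> u (l^k * \<rho>) \<rho>" unfolding u_def
      by (rule u_mono) (use rlk \<rho> in \<open>auto intro: mult_right_mono\<close>)
    finally have E1: "measure lebesgue E \<le> u (l^k * \<rho>) \<rho>" .
    have "\<rho> < 4 * R" using \<rho> R by simp
    then have E2: "(1 + c)^k * u (l^k * \<rho>) \<rho> \<le> u \<rho> (\<rho> + 2 * \<rho>)"
      using iterate[OF P assms(2) z op, where n=k and z=z] \<rho> unfolding u_def l_def c_def kk_def S_def by blast
    have E3: "u \<rho> (\<rho> + 2 * \<rho>) \<le> measure lborel (ball z (3 * \<rho>))"
      unfolding u_def
    proof (rule measure_mono_fmeasurable)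
      show "{q. infdist q S < \<rho>} \<inter> ball z (\<rho> + 2 * \<rho>) \<subseteq> ball z (3 * \<rho>)" by auto
      show "{q. infdist q S < \<rho>} \<inter> ball z (\<rho> + 2 * \<rho>) \<in> sets lborel"
        using NB[of \<rho>] by simp
      show "ball z (3 * \<rho>) \<in> fmeasurable lborel"
        using emeasure_lborel_ball_finite[of z "3 * \<rho>"] by (simp add: fmeasurable_def)
    qed
    have E4: "measure lborel (ball z (3 * \<rho>)) = 3^DIM('a) * measure lebesgue (ball (0::'a) \<rho>)"
    proof -
      have "measure lborel (ball z (3 * \<rho>)) = (3 * \<rho>)^DIM('a) * measure lborel (ball (0::'a) 1)"
        using \<rho> by (intro content_ball_conv_unit_ball) auto
      also have "\<dots> = 3^DIM('a) * (\<rho>^DIM('a) * measure lborel (ball (0::'a) 1))"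
        by (simp add: power_mult_distrib)
      also have "\<rho>^DIM('a) * measure lborel (ball (0::'a) 1) = measure lborel (ball (0::'a) \<rho>)"
        using \<rho> by (intro content_ball_conv_unit_ball[symmetric]) auto
      finally show ?thesis by simp
    qed
    define B where "B = measure lebesgue (ball (0::'a) \<rho>)"
    define mE where "mE = measure lebesgue E"
    have mE0: "0 \<le> mE" by (simp add: mE_def)
    have F: "(1 + c)^k * mE \<le> 3^DIM('a) * B"
    proof -
      have "(1 + c)^k * mE \<le> (1 + c)^k * u (l^k * \<rho>) \<rho>"
        using E1 c by (intro mult_left_mono) (auto simp: mE_def)
      then show ?thesis using E2 E3 E4 by (simp add: B_def)
    qed
    have "mE \<le> mE * ((1 + c)^k * ((1 + c) * r powr \<theta>))"
      using key mE0 by (metis mult_left_mono mult.right_neutral)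
    also have "\<dots> = ((1 + c)^k * mE) * ((1 + c) * r powr \<theta>)" by (simp add: algebra_simps)
    also have "\<dots> \<le> (3^DIM('a) * B) * ((1 + c) * r powr \<theta>)"
      using F c r by (intro mult_right_mono) auto
    also have "\<dots> = C * r powr \<theta> * B" by (simp add: C_def algebra_simps)
    finally show "measure lebesgue ({x. 0 < d_Omega \<Omega> x \<and> d_Omega \<Omega> x < r * \<rho>} \<inter> ball z \<rho>)
           \<le> C * r powr \<theta> * measure lebesgue (ball (0::'a) \<rho>)"
      by (simp add: mE_def E_def B_def)
  qed
  show ?thesis using th C main by blast
qed

end
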